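(* Let $G$ be a countable discrete group, $m$ a probability measure on $G$, $(X,\mu)$ a standard probability space, and $a,b \in \mathrm{Stat}(G,m,X,\mu)$. Then the following are equivalent. (i) $a \preceq b$. (ii) For every finite subset $F \subseteq G$, every $\epsilon > 0$ and every finite collection $A_1,\ldots,A_n$ of measurable subsets of $X$, there exist measurable subsets $B_1,\ldots,B_n$ of $X$ such that \[ \left| \mu(g^a A_i \cap h^a A_j) - \mu(g^b B_i \cap h^b B_j) \right| < \epsilon \] for all $g,h \in F$ and all $i,j \in \{1,\ldots,n\}$.
   Context: A measurable action $a$ of $G$ on $(X,\mu)$ is $m$-stationary if $\sum_{g\in G} m(g)\,\mu(g^aA)=\mu(A)$ for every measurable $A\subseteq X$, where $g^a$ denotes the (nonsingular) transformation of $X$ by which $g$ acts in $a$. $\mathrm{Stat}(G,m,X,\mu)$ is the set of $m$-stationary actions of $G$ on $(X,\mu)$. For $a,b\in\mathrm{Stat}(G,m,X,\mu)$, $a$ is weakly contained in $b$ ($a\preceq b$) if for every $\epsilon>0$, every finite $F\subseteq G$ and every finite collection $A_1,\ldots,A_n$ of measurable subsets of $X$ there are measurable $B_1,\ldots,B_n\subseteq X$ with $|\mu(g^aA_i\cap A_j)-\mu(g^bB_i\cap B_j)|<\epsilon$ for all $g\in F$ and $i,j\in\{1,\ldots,n\}$. *)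

theory Defs
  imports "HOL-Analysis.Analysis" "HOL-Probability.Probability" "HOL-Algebra.Group"
begin

definition prob_on_group :: "('g, 'b) monoid_scheme \<Rightarrow> ('g \<Rightarrow> real) \<Rightarrow> bool" where
  "prob_on_group G m \<longleftrightarrow> (\<forall>g\<in>carrier G. 0 \<le> m g) \<and> (m has_sum 1) (carrier G)"

definition nonsingular_action ::
  "('g, 'b) monoid_scheme \<Rightarrow> 'x measure \<Rightarrow> ('g \<Rightarrow> 'x \<Rightarrow> 'x) \<Rightarrow> bool" where
  "nonsingular_action G M a \<longleftrightarrow>
     (\<forall>g\<in>carrier G. a g \<in> M \<rightarrow>\<^sub>M M) \<and>
     (\<forall>x\<in>space M. a \<one>\<^bsub>G\<^esub> x = x) \<and>
     (\<forall>g\<in>carrier G. \<forall>h\<in>carrier G. \<forall>x\<in>space M. a (g \<otimes>\<^bsub>G\<^esub> h) x = a g (a h x)) \<and>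
     (\<forall>g\<in>carrier G. \<forall>A\<in>sets M. (a g -` A \<inter> space M \<in> null_sets M \<longleftrightarrow> A \<in> null_sets M))"

text \<open>Stat(G,m,X,mu): m-stationary actions.  g^a A is the image a g ` A.\<close>
definition stationary_action ::
  "('g, 'b) monoid_scheme \<Rightarrow> ('g \<Rightarrow> real) \<Rightarrow> 'x measure \<Rightarrow> ('g \<Rightarrow> 'x \<Rightarrow> 'x) \<Rightarrow> bool" where
  "stationary_action G m M a \<longleftrightarrow> nonsingular_action G M a \<and>
     (\<forall>A\<in>sets M. (\<Sum>\<^sub>\<infinity>g\<in>carrier G. m g * measure M (a g ` A)) = measure M A)"

text \<open>Weak containment a \<preceq> b (sets indexed by {0..<n} instead of {1..n}).\<close>
definition weakly_contained ::
  "('g, 'b) monoid_scheme \<Rightarrow> 'x measure \<Rightarrow> ('g \<Rightarrow> 'x \<Rightarrow> 'x) \<Rightarrow> ('g \<Rightarrow> 'x \<Rightarrow> 'x) \<Rightarrow> bool" where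
  "weakly_contained G M a b \<longleftrightarrow>
     (\<forall>\<epsilon>>0. \<forall>F. finite F \<and> F \<subseteq> carrier G \<longrightarrow>
       (\<forall>n::nat. \<forall>A::nat \<Rightarrow> 'x set. (\<forall>i<n. A i \<in> sets M) \<longrightarrow>
         (\<exists>B::nat \<Rightarrow> 'x set. (\<forall>i<n. B i \<in> sets M) \<and>
           (\<forall>g\<in>F. \<forall>i<n. \<forall>j<n.
              \<bar>measure M (a g ` A i \<inter> A j) - measure M (b g ` B i \<inter> B j)\<bar> < \<epsilon>))))"

end

theory Submission
  imports Defs
begin

lemma abs_cont_eps:
  assumes fm: "finite_measure M" and f: "f \<in> M \<rightarrow>\<^sub>M M" and sp: "space M = UNIV"
    and nul: "\<And>A. A \<in> null_sets M \<Longrightarrow> f -` A \<in> null_sets M" and e: "\<epsilon> > 0"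
  shows "\<exists>\<delta>>0. \<forall>C\<in>sets M. measure M C < \<delta> \<longrightarrow> measure M (f -` C) < \<epsilon>"
proof (rule ccontr)
  interpret finite_measure M by (rule fm)
  assume "\<not> ?thesis"
  then have "\<forall>n::nat. \<exists>C\<in>sets M. measure M C < (1/2)^n \<and> measure M (f -` C) \<ge> \<epsilon>"
    by (metis not_less zero_less_power zero_less_divide_iff zero_less_one zero_less_numeral)
  then obtain C where C: "\<And>n. C n \<in> sets M" "\<And>n. measure M (C n) < (1/2)^n"
     "\<And>n. measure M (f -` C n) \<ge> \<epsilon>" by metis
  have fs: "\<And>S. S \<in> sets M \<Longrightarrow> f -` S \<in> sets M"
    using measurable_sets[OF f] sp by (metis Int_UNIV_right)
  have summ: "summable (\<lambda>n. measure M (C n))"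
  proof (rule summable_comparison_test')
    show "summable (\<lambda>n. (1/2::real)^n)" by (rule summable_geometric) simp
    show "norm (measure M (C n)) \<le> (1/2)^n" for n using C(2)[of n] by simp
  qed
  have "limsup C \<in> null_sets M"
    by (rule borel_cantelli_limsup1) (use C summ in \<open>auto simp: less_top[symmetric]\<close>)
  then have N: "f -` limsup C \<in> null_sets M" by (rule nul)
  define D where "D m = (\<Union>k\<in>{m..}. f -` C k)" for m
  have eq: "f -` limsup C = (\<Inter>m. D m)" unfolding D_def by (auto simp: limsup_INF_SUP)
  have Ds: "D m \<in> sets M" for m unfolding D_def using fs C(1) by auto
  have dec: "decseq D" unfolding D_def decseq_def by (auto intro: order_trans)
  have "D m \<supseteq> f -` C m" for m unfolding D_def by auto
  then have ge: "measure M (D m) \<ge> \<epsilon>" for m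
    by (meson C(3) Ds finite_measure_mono order_trans)
  have "(\<lambda>m. measure M (D m)) \<longlonglongrightarrow> measure M (\<Inter>m. D m)"
    by (rule finite_Lim_measure_decseq) (use Ds dec in auto)
  then have "\<epsilon> \<le> measure M (\<Inter>m. D m)"
    by (rule LIMSEQ_le_const) (use ge in auto)
  moreover have "measure M (\<Inter>m. D m) = 0" using N eq by (simp add: measure_eq_0_null_sets)
  ultimately show False using e by simp
qed


lemma act_inv:
  assumes G: "group G" and na: "nonsingular_action G M a" and sp: "space M = UNIV"
    and g: "g \<in> carrier G"
  shows "a g (a (inv\<^bsub>G\<^esub> g) x) = x" "a (inv\<^bsub>G\<^esub> g) (a g x) = x"
proof -
  have ig: "inv\<^bsub>G\<^esub> g \<in> carrier G" using G g by simp
  have "a (g \<otimes>\<^bsub>G\<^esub> inv\<^bsub>G\<^esub> g) x = a g (a (inv\<^bsub>G\<^esub> g) x)" using na g ig sp unfolding nonsingular_action_def by blast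
  then show "a g (a (inv\<^bsub>G\<^esub> g) x) = x" using na sp group.r_inv[OF G g] unfolding nonsingular_action_def by simp
  have "a (inv\<^bsub>G\<^esub> g \<otimes>\<^bsub>G\<^esub> g) x = a (inv\<^bsub>G\<^esub> g) (a g x)" using na g ig sp unfolding nonsingular_action_def by blast
  then show "a (inv\<^bsub>G\<^esub> g) (a g x) = x" using na sp group.l_inv[OF G g] unfolding nonsingular_action_def by simp
qed

lemma act_img:
  assumes G: "group G" and na: "nonsingular_action G M a" and sp: "space M = UNIV"
    and g: "g \<in> carrier G"
  shows "a g ` S = a (inv\<^bsub>G\<^esub> g) -` S"
proof -
  note i = act_inv[OF G na sp g]
  show ?thesis
  proof
    show "a g ` S \<subseteq> a (inv\<^bsub>G\<^esub> g) -` S" using i(2) by auto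
    show "a (inv\<^bsub>G\<^esub> g) -` S \<subseteq> a g ` S"
    proof
      fix x assume "x \<in> a (inv\<^bsub>G\<^esub> g) -` S"
      then show "x \<in> a g ` S" using i(1)[of x] by (metis image_eqI vimageE)
    qed
  qed
qed

lemma act_inj:
  assumes G: "group G" and na: "nonsingular_action G M a" and sp: "space M = UNIV"
    and g: "g \<in> carrier G"
  shows "inj (a g)"
  by (metis act_inv(2)[OF G na sp g] injI)

lemma act_sets:
  assumes G: "group G" and na: "nonsingular_action G M a" and sp: "space M = UNIV"
    and g: "g \<in> carrier G" and S: "S \<in> sets M"
  shows "a g ` S \<in> sets M"
proof -
  have ig: "inv\<^bsub>G\<^esub> g \<in> carrier G" using G g by simp
  have "a (inv\<^bsub>G\<^esub> g) \<in> M \<rightarrow>\<^sub>M M" using na ig unfolding nonsingular_action_def by blast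
  from measurable_sets[OF this S] show ?thesis using act_img[OF G na sp g] sp by simp
qed

lemma act_one:
  assumes G: "group G" and na: "nonsingular_action G M a" and sp: "space M = UNIV"
  shows "a \<one>\<^bsub>G\<^esub> ` S = S"
proof -
  have "a \<one>\<^bsub>G\<^esub> x = x" for x using na sp unfolding nonsingular_action_def by blast
  then show ?thesis by simp
qed

lemma act_comp:
  assumes G: "group G" and na: "nonsingular_action G M a" and sp: "space M = UNIV"
    and g: "g \<in> carrier G" and h: "h \<in> carrier G"
  shows "a g ` (a h ` S) = a (g \<otimes>\<^bsub>G\<^esub> h) ` S"
proof -
  have "a (g \<otimes>\<^bsub>G\<^esub> h) x = a g (a h x)" for x using na sp g h unfolding nonsingular_action_def by blast
  then show ?thesis by (simp add: image_image)
qed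

lemma act_small:
  assumes G: "group G" and na: "nonsingular_action G M a" and sp: "space M = UNIV"
    and fm: "finite_measure M" and h: "h \<in> carrier G" and e: "\<epsilon> > 0"
  shows "\<exists>\<delta>>0. \<forall>C\<in>sets M. measure M C < \<delta> \<longrightarrow> measure M (a h ` C) < \<epsilon>"
proof -
  have ig: "inv\<^bsub>G\<^esub> h \<in> carrier G" using G h by simp
  have f: "a (inv\<^bsub>G\<^esub> h) \<in> M \<rightarrow>\<^sub>M M" using na ig unfolding nonsingular_action_def by blast
  have nul: "a (inv\<^bsub>G\<^esub> h) -` A \<in> null_sets M" if "A \<in> null_sets M" for A
    using na ig that sp null_setsD2[OF that] unfolding nonsingular_action_def by auto
  from abs_cont_eps[OF fm f sp nul e] show ?thesis using act_img[OF G na sp h] by simp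
qed

lemma act_small_fin:
  assumes G: "group G" and na: "nonsingular_action G M a" and sp: "space M = UNIV"
    and fm: "finite_measure M" and F: "finite F" "F \<subseteq> carrier G" and e: "\<epsilon> > 0"
  shows "\<exists>\<delta>>0. \<forall>h\<in>F. \<forall>C\<in>sets M. measure M C < \<delta> \<longrightarrow> measure M (a h ` C) < \<epsilon>"
  using F
proof (induction F rule: finite_induct)
  case empty
  then show ?case by (intro exI[of _ 1]) auto
next
  case (insert x F)
  then obtain d1 where d1: "d1 > 0" "\<forall>h\<in>F. \<forall>C\<in>sets M. measure M C < d1 \<longrightarrow> measure M (a h ` C) < \<epsilon>"
    by auto
  obtain d2 where d2: "d2 > 0" "\<forall>C\<in>sets M. measure M C < d2 \<longrightarrow> measure M (a x ` C) < \<epsilon>"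
    using act_small[OF G na sp fm _ e, of x] insert by auto
  show ?case by (rule exI[of _ "min d1 d2"]) (use d1 d2 in auto)
qed

lemma kcl:
  assumes G: "group G" and g: "g \<in> carrier G" and h: "h \<in> carrier G"
  shows "inv\<^bsub>G\<^esub> h \<otimes>\<^bsub>G\<^esub> g \<in> carrier G"
  using G g h by (meson group.inv_closed group.is_monoid monoid.m_closed)

lemma kcomp:
  assumes G: "group G" and g: "g \<in> carrier G" and h: "h \<in> carrier G"
  shows "h \<otimes>\<^bsub>G\<^esub> (inv\<^bsub>G\<^esub> h \<otimes>\<^bsub>G\<^esub> g) = g"
  using G g h by (metis group.inv_closed group.is_monoid group.r_inv monoid.m_assoc monoid.l_one)

theorem mainTheorem1:
  fixes G :: "('g, 'b) monoid_scheme"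
    and m :: "'g \<Rightarrow> real"
    and M :: "'x::polish_space measure"
    and a b :: "'g \<Rightarrow> 'x \<Rightarrow> 'x"
  assumes "group G"
    and "countable (carrier G)"
    and "prob_on_group G m"
    and "prob_space M"
    and "sets M = sets borel"
    and "stationary_action G m M a"
    and "stationary_action G m M b"
  shows "weakly_contained G M a b \<longleftrightarrow>
    (\<forall>F. finite F \<and> F \<subseteq> carrier G \<longrightarrow>
      (\<forall>\<epsilon>>0. \<forall>n::nat. \<forall>A::nat \<Rightarrow> 'x set. (\<forall>i<n. A i \<in> sets M) \<longrightarrow>
        (\<exists>B::nat \<Rightarrow> 'x set. (\<forall>i<n. B i \<in> sets M) \<and>
          (\<forall>g\<in>F. \<forall>h\<in>F. \<forall>i<n. \<forall>j<n.
             \<bar>measure M (a g ` A i \<inter> a h ` A j) - measure M (b g ` B i \<inter> b h ` B j)\<bar> < \<epsilon>))))"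
  proof -
  note G = assms(1)
  have sp: "space M = UNIV" using sets_eq_imp_space_eq[OF assms(5)] by simp
  interpret prob_space M by (rule assms(4))
  have fm: "finite_measure M" by (rule finite_measure_axioms)
  have na: "nonsingular_action G M a" using assms(6) unfolding stationary_action_def by blast
  have nb: "nonsingular_action G M b" using assms(7) unfolding stationary_action_def by blast
  have one: "\<one>\<^bsub>G\<^esub> \<in> carrier G" using monoid.one_closed[OF group.is_monoid[OF G]] .
  note a1 = act_one[OF G na sp] and b1 = act_one[OF G nb sp]
  show ?thesis
  proof
    assume W: "weakly_contained G M a b"
    show "\<forall>F. finite F \<and> F \<subseteq> carrier G \<longrightarrow>
      (\<forall>\<epsilon>>0. \<forall>n::nat. \<forall>A::nat \<Rightarrow> 'x set. (\<forall>i<n. A i \<in> sets M) \<longrightarrow>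
        (\<exists>B::nat \<Rightarrow> 'x set. (\<forall>i<n. B i \<in> sets M) \<and>
          (\<forall>g\<in>F. \<forall>h\<in>F. \<forall>i<n. \<forall>j<n.
             \<bar>measure M (a g ` A i \<inter> a h ` A j) - measure M (b g ` B i \<inter> b h ` B j)\<bar> < \<epsilon>)))"
    proof (intro allI impI)
      fix F and \<epsilon> :: real and n :: nat and A :: "nat \<Rightarrow> 'x set"
      assume F: "finite F \<and> F \<subseteq> carrier G" and e: "\<epsilon> > 0" and A: "\<forall>i<n. A i \<in> sets M"
      have e4: "\<epsilon>/4 > 0" using e by simp
      obtain \<eta> where eta: "\<eta> > 0" "\<forall>h\<in>F. \<forall>C\<in>sets M. measure M C < \<eta> \<longrightarrow> measure M (b h ` C) < \<epsilon>/4"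
        using act_small_fin[OF G nb sp fm _ _ e4, of F] F by auto
      define e' where "e' = min (\<epsilon>/8) (\<eta>/7)"
      have e'pos: "e' > 0" using e eta unfolding e'_def by simp
      define Q where "Q = F \<times> F \<times> {..<n} \<times> {..<n}"
      have fQ: "finite Q" unfolding Q_def using F by simp
      obtain en where en: "bij_betw en {0..<card Q} Q" using ex_bij_betw_nat_finite[OF fQ] by blast
      define A' where "A' k = (if k < n then A k else if k = n then UNIV else
          (case en (k - Suc n) of (g,h,i,j) \<Rightarrow> a (inv\<^bsub>G\<^esub> h \<otimes>\<^bsub>G\<^esub> g) ` A i \<inter> A j))" for k
      define N where "N = Suc n + card Q"
      define F' where "F' = insert \<one>\<^bsub>G\<^esub> (F \<union> (\<lambda>(g,h). inv\<^bsub>G\<^esub> h \<otimes>\<^bsub>G\<^esub> g) ` (F \<times> F))"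
      have F'fin: "finite F'" unfolding F'_def using F by simp
      have F'sub: "F' \<subseteq> carrier G" unfolding F'_def using F one by (auto intro!: kcl[OF G])
      have A'sets: "A' k \<in> sets M" if "k < N" for k
      proof (cases "k < n")
        case True then show ?thesis using A unfolding A'_def by simp
      next
        case False
        show ?thesis
        proof (cases "k = n")
          case True then show ?thesis unfolding A'_def using sp by (metis sets.top less_irrefl)
        next
          case False
          with \<open>\<not> k < n\<close> have "k - Suc n < card Q" using that unfolding N_def by simp
          then have "en (k - Suc n) \<in> Q" using en unfolding bij_betw_def by auto
          then obtain g h i j where q: "en (k - Suc n) = (g,h,i,j)" "g \<in> F" "h \<in> F" "i < n" "j < n"
            unfolding Q_def by auto
          have gh: "inv\<^bsub>G\<^esub> h \<otimes>\<^bsub>G\<^esub> g \<in> carrier G" by (rule kcl[OF G]) (use q F in auto)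
          have "A' k = a (inv\<^bsub>G\<^esub> h \<otimes>\<^bsub>G\<^esub> g) ` A i \<inter> A j"
            unfolding A'_def using False \<open>\<not> k < n\<close> q by simp
          then show ?thesis using act_sets[OF G na sp gh] A q by auto
        qed
      qed
      have W0: "\<forall>\<epsilon>>0. \<forall>F. finite F \<and> F \<subseteq> carrier G \<longrightarrow>
       (\<forall>n::nat. \<forall>A::nat \<Rightarrow> 'x set. (\<forall>i<n. A i \<in> sets M) \<longrightarrow>
         (\<exists>B::nat \<Rightarrow> 'x set. (\<forall>i<n. B i \<in> sets M) \<and>
           (\<forall>g\<in>F. \<forall>i<n. \<forall>j<n.
              \<bar>measure M (a g ` A i \<inter> A j) - measure M (b g ` B i \<inter> B j)\<bar> < \<epsilon>)))"
        using W unfolding weakly_contained_def .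
      have A'sets': "\<forall>i<N. A' i \<in> sets M" using A'sets by blast
      have ex: "\<exists>B'. (\<forall>i<N. B' i \<in> sets M) \<and> (\<forall>g\<in>F'. \<forall>i<N. \<forall>j<N.
              \<bar>measure M (a g ` A' i \<inter> A' j) - measure M (b g ` B' i \<inter> B' j)\<bar> < e')"
        using mp[OF spec[OF spec[OF mp[OF spec[OF mp[OF spec[OF W0, of e'] e'pos], of F'] conjI[OF F'fin F'sub]], of N], of A'] A'sets'] .
      from ex obtain B' where B'all: "(\<forall>i<N. B' i \<in> sets M) \<and> (\<forall>g\<in>F'. \<forall>i<N. \<forall>j<N.
              \<bar>measure M (a g ` A' i \<inter> A' j) - measure M (b g ` B' i \<inter> B' j)\<bar> < e')" ..
      have B'sets: "\<forall>i<N. B' i \<in> sets M" using B'all by (rule conjunct1)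
      have B': "\<forall>g\<in>F'. \<forall>i<N. \<forall>j<N.
              \<bar>measure M (a g ` A' i \<inter> A' j) - measure M (b g ` B' i \<inter> B' j)\<bar> < e'" using B'all by (rule conjunct2)
      show "\<exists>B::nat \<Rightarrow> 'x set. (\<forall>i<n. B i \<in> sets M) \<and>
          (\<forall>g\<in>F. \<forall>h\<in>F. \<forall>i<n. \<forall>j<n.
             \<bar>measure M (a g ` A i \<inter> a h ` A j) - measure M (b g ` B i \<inter> b h ` B j)\<bar> < \<epsilon>)"
      proof (intro exI[of _ B'] conjI ballI allI impI)
        fix i assume "i < n" then show "B' i \<in> sets M" using B'sets unfolding N_def by simp
      next
        fix g h i j assume g: "g \<in> F" and h: "h \<in> F" and i: "i < n" and j: "j < n"
        have gc: "g \<in> carrier G" and hc: "h \<in> carrier G" using g h F by auto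
        define k where "k = inv\<^bsub>G\<^esub> h \<otimes>\<^bsub>G\<^esub> g"
        have kc: "k \<in> carrier G" unfolding k_def by (rule kcl[OF G gc hc])
        have hk: "h \<otimes>\<^bsub>G\<^esub> k = g" unfolding k_def using kcomp[OF G gc hc] .
        have "(g,h,i,j) \<in> Q" unfolding Q_def using g h i j by simp
        then have "(g,h,i,j) \<in> en ` {0..<card Q}" using en by (simp add: bij_betw_def)
        then obtain t where t0: "t \<in> {0..<card Q}" "(g,h,i,j) = en t" by (rule imageE)
        then have t: "t < card Q" "en t = (g,h,i,j)" by auto
        define T where "T = Suc n + t"
        have TN: "T < N" "n < N" "i < N" "j < N" unfolding T_def N_def using t i j by auto
        define D where "D = a k ` A i \<inter> A j"
        have AT: "A' T = D" unfolding A'_def D_def T_def k_def using t by simp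
        have An: "A' n = UNIV" unfolding A'_def by simp
        have Ai: "A' i = A i" and Aj: "A' j = A j" unfolding A'_def using i j by auto
        have kF: "k \<in> F'" and hF: "h \<in> F'" and oF: "\<one>\<^bsub>G\<^esub> \<in> F'" unfolding F'_def k_def using g h by auto
        define Bn where "Bn = B' T"
        define BX where "BX = B' n"
        define C where "C = b k ` B' i \<inter> B' j"
        have Bi: "B' i \<in> sets M" and Bj: "B' j \<in> sets M" and Bns: "Bn \<in> sets M" and BXs: "BX \<in> sets M"
          using B'sets TN unfolding Bn_def BX_def by auto
        have Ais: "A i \<in> sets M" and Ajs: "A j \<in> sets M" using A i j by auto
        have Ds: "D \<in> sets M" unfolding D_def using act_sets[OF G na sp kc Ais] Ajs by auto
        have Cs: "C \<in> sets M" unfolding C_def using act_sets[OF G nb sp kc Bi] Bj by auto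
        have bki: "b k ` B' i \<in> sets M" using act_sets[OF G nb sp kc Bi] .
        have f1: "\<bar>1 - measure M BX\<bar> < e'"
          using B'[rule_format, OF oF TN(2) TN(2)] An a1 b1 prob_space sp unfolding BX_def by simp
        have f2: "\<bar>measure M D - measure M Bn\<bar> < e'"
          using B'[rule_format, OF oF TN(1) TN(1)] AT a1 b1 unfolding Bn_def by simp
        have f3: "\<bar>measure M D - measure M (Bn \<inter> B' j)\<bar> < e'"
          using B'[rule_format, OF oF TN(1) TN(4)] AT Aj a1 b1 unfolding Bn_def
          by (simp add: D_def Int_assoc)
        have f4: "\<bar>measure M D - measure M (b k ` B' i \<inter> Bn)\<bar> < e'"
          using B'[rule_format, OF kF TN(3) TN(1)] AT Ai unfolding Bn_def
          by (simp add: D_def Int_assoc[symmetric])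
        have f5: "\<bar>measure M D - measure M C\<bar> < e'"
          using B'[rule_format, OF kF TN(3) TN(4)] Ai Aj unfolding C_def D_def by simp
        have f6: "\<bar>measure M (a h ` D) - measure M (b h ` Bn \<inter> BX)\<bar> < e'"
          using B'[rule_format, OF hF TN(1) TN(2)] AT An unfolding Bn_def BX_def by simp
        have eqa: "a g ` A i \<inter> a h ` A j = a h ` D"
          unfolding D_def using act_comp[OF G na sp hc kc] hk image_Int[OF act_inj[OF G na sp hc]]
          by simp
        have eqb: "b g ` B' i \<inter> b h ` B' j = b h ` C"
          unfolding C_def using act_comp[OF G nb sp hc kc] hk image_Int[OF act_inj[OF G nb sp hc]]
          by simp
        define X1 where "X1 = Bn - C"
        define X2 where "X2 = C - Bn"
        have X1s: "X1 \<in> sets M" and X2s: "X2 \<in> sets M" unfolding X1_def X2_def using Bns Cs by auto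
        have "X1 = (Bn - B' j) \<union> (Bn - b k ` B' i)" unfolding X1_def C_def by auto
        then have "measure M X1 \<le> measure M (Bn - B' j) + measure M (Bn - b k ` B' i)"
          using measure_Un_le[of "Bn - B' j" M "Bn - b k ` B' i"] Bns Bj bki by auto
        also have "\<dots> = (measure M Bn - measure M (Bn \<inter> B' j)) + (measure M Bn - measure M (Bn \<inter> b k ` B' i))"
          using finite_measure_Diff'[OF Bns Bj] finite_measure_Diff'[OF Bns bki] by simp
        finally have mX1: "measure M X1 < 4 * e'" using f2 f3 f4 by (simp add: Int_commute)
        have dX1: "measure M X1 = measure M Bn - measure M (Bn \<inter> C)"
          unfolding X1_def by (rule finite_measure_Diff'[OF Bns Cs])
        have dX2: "measure M X2 = measure M C - measure M (C \<inter> Bn)"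
          unfolding X2_def by (rule finite_measure_Diff'[OF Cs Bns])
        have mX2: "measure M X2 < 6 * e'" using dX1 dX2 mX1 f2 f5 by (simp add: Int_commute)
        have hF0: "h \<in> F" by (rule h)
        have sX1: "measure M (b h ` X1) < \<epsilon>/4"
        proof -
          have "e' \<le> \<eta>/7" unfolding e'_def by simp
          then have "measure M X1 < \<eta>" using mX1 eta(1) by linarith
          then show ?thesis using eta(2)[rule_format, OF hF0 X1s] by simp
        qed
        have sX2: "measure M (b h ` X2) < \<epsilon>/4"
        proof -
          have "e' \<le> \<eta>/7" unfolding e'_def by simp
          then have "measure M X2 < \<eta>" using mX2 eta(1) by linarith
          then show ?thesis using eta(2)[rule_format, OF hF0 X2s] by simp
        qed
        have bhBn: "b h ` Bn \<in> sets M" using act_sets[OF G nb sp hc Bns] .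
        have bhC: "b h ` C \<in> sets M" using act_sets[OF G nb sp hc Cs] .
        have bhX1: "b h ` X1 \<in> sets M" using act_sets[OF G nb sp hc X1s] .
        have bhX2: "b h ` X2 \<in> sets M" using act_sets[OF G nb sp hc X2s] .
        have "b h ` C \<subseteq> b h ` Bn \<union> b h ` X2" unfolding X2_def by auto
        then have i1: "measure M (b h ` C) \<le> measure M (b h ` Bn) + measure M (b h ` X2)"
          by (meson bhBn bhX2 finite_measure_mono measure_Un_le order_trans sets.Un)
        have "b h ` Bn \<subseteq> b h ` C \<union> b h ` X1" unfolding X1_def by auto
        then have i2: "measure M (b h ` Bn) \<le> measure M (b h ` C) + measure M (b h ` X1)"
          by (meson bhC bhX1 finite_measure_mono measure_Un_le order_trans sets.Un)
        have sub3: "b h ` Bn \<subseteq> (b h ` Bn \<inter> BX) \<union> (UNIV - BX)" by auto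
        then have i3: "measure M (b h ` Bn) \<le> measure M (b h ` Bn \<inter> BX) + measure M (UNIV - BX)"
        proof -
          have U: "UNIV - BX \<in> sets M" using sets.compl_sets[OF BXs] sp by simp
          have I: "b h ` Bn \<inter> BX \<in> sets M" using bhBn BXs by auto
          have "measure M (b h ` Bn) \<le> measure M (b h ` Bn \<inter> BX \<union> (UNIV - BX))"
            using finite_measure_mono[OF sub3] U I by auto
          also have "\<dots> \<le> measure M (b h ` Bn \<inter> BX) + measure M (UNIV - BX)"
            using measure_Un_le[OF I U] .
          finally show ?thesis .
        qed
        have i4: "measure M (UNIV - BX) = 1 - measure M BX"
          using finite_measure_Diff'[OF _ BXs, of UNIV] sp prob_space sets.top[of M] by simp
        have i5: "measure M (b h ` Bn \<inter> BX) \<le> measure M (b h ` Bn)"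
          using finite_measure_mono[of "b h ` Bn \<inter> BX" "b h ` Bn"] bhBn by auto
        have "\<bar>measure M (a h ` D) - measure M (b h ` C)\<bar> < \<epsilon>"
          using i1 i2 i3 i4 i5 sX1 sX2 f1 f6 e unfolding e'_def by linarith
        then show "\<bar>measure M (a g ` A i \<inter> a h ` A j) - measure M (b g ` B' i \<inter> b h ` B' j)\<bar> < \<epsilon>"
          using eqa eqb by simp
      qed
    qed
  next
    assume R: "\<forall>F. finite F \<and> F \<subseteq> carrier G \<longrightarrow>
      (\<forall>\<epsilon>>0. \<forall>n::nat. \<forall>A::nat \<Rightarrow> 'x set. (\<forall>i<n. A i \<in> sets M) \<longrightarrow>
        (\<exists>B::nat \<Rightarrow> 'x set. (\<forall>i<n. B i \<in> sets M) \<and>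
          (\<forall>g\<in>F. \<forall>h\<in>F. \<forall>i<n. \<forall>j<n.
             \<bar>measure M (a g ` A i \<inter> a h ` A j) - measure M (b g ` B i \<inter> b h ` B j)\<bar> < \<epsilon>)))"
    show "weakly_contained G M a b" unfolding weakly_contained_def
    proof (intro allI impI)
      fix \<epsilon> :: real and F and n :: nat and A :: "nat \<Rightarrow> 'x set"
      assume e: "\<epsilon> > 0" and F: "finite F \<and> F \<subseteq> carrier G" and A: "\<forall>i<n. A i \<in> sets M"
      have F1: "finite (insert \<one>\<^bsub>G\<^esub> F) \<and> insert \<one>\<^bsub>G\<^esub> F \<subseteq> carrier G" using F one by auto
      note ex2 = R[rule_format, OF F1 e, of n A, OF A[rule_format]]
      from ex2 obtain B where BB: "(\<forall>i<n. B i \<in> sets M) \<and>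
        (\<forall>g\<in>insert \<one>\<^bsub>G\<^esub> F. \<forall>h\<in>insert \<one>\<^bsub>G\<^esub> F. \<forall>i<n. \<forall>j<n.
             \<bar>measure M (a g ` A i \<inter> a h ` A j) - measure M (b g ` B i \<inter> b h ` B j)\<bar> < \<epsilon>)" ..
      have B: "\<forall>i<n. B i \<in> sets M" using BB by (rule conjunct1)
      have Bb: "\<forall>g\<in>insert \<one>\<^bsub>G\<^esub> F. \<forall>h\<in>insert \<one>\<^bsub>G\<^esub> F. \<forall>i<n. \<forall>j<n.
             \<bar>measure M (a g ` A i \<inter> a h ` A j) - measure M (b g ` B i \<inter> b h ` B j)\<bar> < \<epsilon>"
        using BB by (rule conjunct2)
      show "\<exists>B. (\<forall>i<n. B i \<in> sets M) \<and> (\<forall>g\<in>F. \<forall>i<n. \<forall>j<n.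
              \<bar>measure M (a g ` A i \<inter> A j) - measure M (b g ` B i \<inter> B j)\<bar> < \<epsilon>)"
      proof (intro exI[of _ B] conjI ballI allI impI)
        fix i assume "i < n" then show "B i \<in> sets M" using B by simp
      next
        fix g i j assume "g \<in> F" "i < n" "j < n"
        then show "\<bar>measure M (a g ` A i \<inter> A j) - measure M (b g ` B i \<inter> B j)\<bar> < \<epsilon>"
          using Bb[rule_format, of g "\<one>\<^bsub>G\<^esub>" i j] a1 b1 by simp
      qed
    qed
  qed
qed

end
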